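(* Let $(S,T_1,*,\equiv',1',\sigma_1',\bar\sigma_1')$ be a link model. Then there is a well-defined map $f:B_\infty\to S$ satisfying $f(1)=1'$, $f(\sigma_i)=T_1^{i-1}(\sigma_1')$ for all $i\in\mathbb{N}$ (with $T_1^0$ the identity), and $f(b_1\cdot b_2)=f(b_1)*f(b_2)$ for all $b_1,b_2\in B_\infty$.
   Context: Consider a first-order language with signature $(\cdot,T,\equiv,1,\sigma,\bar\sigma)$: $\cdot$ binary function, $T$ unary function, $\equiv$ binary predicate, constants $1,\sigma,\bar\sigma$. The link axioms are: $\forall x,y,z\ x\cdot(y\cdot z)=(x\cdot y)\cdot z$; $\forall x\ 1\cdot x=x$; $\forall x\ x\cdot 1=x$; $\sigma\cdot\bar\sigma=\bar\sigma\cdot\sigma=1$; $\forall x,y\ T(x\cdot y)=T(x)\cdot T(y)$; $T(1)=1$; $\sigma\cdot T(\sigma)\cdot\sigma=T(\sigma)\cdot\sigma\cdot T(\sigma)$; $\forall b\ \sigma\cdot T(T(b))=T(T(b))\cdot\sigma$; $\equiv$ is reflexive, symmetric and transitive; $\forall x,y,z\ (y\cdot z=1\to x\equiv y\cdot x\cdot z)$; $\forall x\ x\equiv\sigma\cdot T(x)$; $\forall x\ x\equiv\bar\sigma\cdot T(x)$. A link model is a structure satisfying these axioms; in $(S,T_1,*,\equiv',1',\sigma_1',\bar\sigma_1')$ the symbols $\cdot,T,\equiv,1,\sigma,\bar\sigma$ are interpreted by $*,T_1,\equiv',1',\sigma_1',\bar\sigma_1'$. $B_\infty$ is the group generated by $\{\sigma_i\}_{i\in\mathbb{N}}$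 with relations $\sigma_i\sigma_j=\sigma_j\sigma_i$ for $i\ge j+2$ and $\sigma_i\sigma_{i+1}\sigma_i=\sigma_{i+1}\sigma_i\sigma_{i+1}$. *)

theory Defs
  imports Main
begin

definition link_model ::
  "('a \<Rightarrow> 'a \<Rightarrow> 'a) \<Rightarrow> ('a \<Rightarrow> 'a) \<Rightarrow> ('a \<Rightarrow> 'a \<Rightarrow> bool) \<Rightarrow> 'a \<Rightarrow> 'a \<Rightarrow> 'a \<Rightarrow> bool" where
  "link_model mult T eqv one sig sigb \<longleftrightarrow>
     (\<forall>x y z. mult x (mult y z) = mult (mult x y) z) \<and>
     (\<forall>x. mult one x = x) \<and>
     (\<forall>x. mult x one = x) \<and>
     mult sig sigb = one \<and> mult sigb sig = one \<and>
     (\<forall>x y. T (mult x y) = mult (T x) (T y)) \<and>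
     T one = one \<and>
     mult (mult sig (T sig)) sig = mult (mult (T sig) sig) (T sig) \<and>
     (\<forall>b. mult sig (T (T b)) = mult (T (T b)) sig) \<and>
     (\<forall>x. eqv x x) \<and>
     (\<forall>x y. eqv x y \<longrightarrow> eqv y x) \<and>
     (\<forall>x y z. eqv x y \<longrightarrow> eqv y z \<longrightarrow> eqv x z) \<and>
     (\<forall>x y z. mult y z = one \<longrightarrow> eqv x (mult (mult y x) z)) \<and>
     (\<forall>x. eqv x (mult sig (T x))) \<and>
     (\<forall>x. eqv x (mult sigb (T x)))"

text \<open>A letter (k, True) stands for sigma_(k+1), (k, False) for its inverse.\<close>

type_synonym bword = "(nat \<times> bool) list"

inductive braid_eq :: "bword \<Rightarrow> bword \<Rightarrow> bool" where
  refl: "braid_eq w w"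
| sym: "braid_eq v w \<Longrightarrow> braid_eq w v"
| trans: "braid_eq u v \<Longrightarrow> braid_eq v w \<Longrightarrow> braid_eq u w"
| ctxt: "braid_eq v w \<Longrightarrow> braid_eq (p @ v @ q) (p @ w @ q)"
| cancel: "braid_eq [(k, b), (k, \<not> b)] []"
| far: "i \<ge> j + 2 \<Longrightarrow> braid_eq [(i, True), (j, True)] [(j, True), (i, True)]"
| braid: "braid_eq [(i, True), (Suc i, True), (i, True)] [(Suc i, True), (i, True), (Suc i, True)]"

lemma equivp_braid_eq: "equivp braid_eq"
  by (intro equivpI reflpI sympI transpI) (auto intro: braid_eq.intros)

quotient_type braid = bword / braid_eq
  by (rule equivp_braid_eq)

lift_definition braid_one :: braid is "[]" .

lift_definition braid_mult :: "braid \<Rightarrow> braid \<Rightarrow> braid" is "(@)"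
proof -
  fix a b c d :: bword
  assume h1: "braid_eq a b" and h2: "braid_eq c d"
  have "braid_eq ([] @ a @ c) ([] @ b @ c)" using h1 by (rule braid_eq.ctxt)
  moreover have "braid_eq (b @ c @ []) (b @ d @ [])" using h2 by (rule braid_eq.ctxt)
  ultimately show "braid_eq (a @ c) (b @ d)" by (auto intro: braid_eq.trans)
qed

lift_definition braid_gen :: "nat \<Rightarrow> braid" is "\<lambda>i. [(i - 1, True)]" .

end

theory Submission
  imports Defs
begin

fun bev :: "('a \<Rightarrow> 'a \<Rightarrow> 'a) \<Rightarrow> ('a \<Rightarrow> 'a) \<Rightarrow> 'a \<Rightarrow> 'a \<Rightarrow> 'a \<Rightarrow> bword \<Rightarrow> 'a" where
  "bev m T one s sb [] = one"
| "bev m T one s sb ((k, b) # w) = m ((T ^^ k) (if b then s else sb)) (bev m T one s sb w)"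

lemma Tpow_mult:
  assumes "\<forall>x y. T (m x y) = m (T x) (T y)"
  shows "(T ^^ k) (m x y) = m ((T ^^ k) x) ((T ^^ k) y)"
  using assms by (induction k) auto

lemma Tpow_one:
  assumes "T one = one"
  shows "(T ^^ k) one = one"
  using assms by (induction k) auto

lemma lmD:
  assumes "link_model m T eqv one s sb"
  shows "\<forall>x y z. m x (m y z) = m (m x y) z" "\<forall>x. m one x = x" "\<forall>x. m x one = x"
    "m s sb = one" "m sb s = one" "\<forall>x y. T (m x y) = m (T x) (T y)" "T one = one"
    "m (m s (T s)) s = m (m (T s) s) (T s)" "\<forall>b. m s (T (T b)) = m (T (T b)) s"
  using assms unfolding link_model_def
  apply -
  apply (erule conjE, assumption)
  by ((erule conjE)+, assumption)+

lemma bev_append: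
  assumes L: "link_model m T eqv one s sb"
  shows "bev m T one s sb (v @ w) = m (bev m T one s sb v) (bev m T one s sb w)"
  using lmD[OF L] by (induction v) auto

lemma bev_resp:
  assumes L: "link_model m T eqv one s sb"
  shows "braid_eq v w \<Longrightarrow> bev m T one s sb v = bev m T one s sb w"
proof (induction rule: braid_eq.induct)
  case (ctxt v w p q)
  then show ?case using bev_append[OF L] by simp
next
  case (cancel k b)
  have hm: "\<forall>x y. T (m x y) = m (T x) (T y)" and h1: "T one = one"
    using lmD[OF L] by blast+
  have ru: "\<forall>x. m x one = x" using lmD[OF L] by blast+
  have "m ((T ^^ k) s) ((T ^^ k) sb) = one" "m ((T ^^ k) sb) ((T ^^ k) s) = one"
    using Tpow_mult[OF hm, of k, symmetric] Tpow_one[of T one, OF h1] lmD(4,5)[OF L]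
    by auto
  then show ?case using ru by auto
next
  case (far i j)
  have hm: "\<forall>x y. T (m x y) = m (T x) (T y)"
    using lmD[OF L] by blast+
  have ru: "\<forall>x. m x one = x" and c: "\<forall>b. m s (T (T b)) = m (T (T b)) s"
    using lmD[OF L] by blast+
  obtain d where d: "i = j + Suc (Suc d)" using le_Suc_ex[OF far] by auto
  have e: "(T ^^ i) s = (T ^^ j) (T (T ((T ^^ d) s)))"
    unfolding d by (simp only: funpow_add comp_apply funpow.simps)
  have "m ((T ^^ i) s) ((T ^^ j) s) = m ((T ^^ j) s) ((T ^^ i) s)"
    unfolding e by (simp only: Tpow_mult[OF hm, symmetric] c[rule_format])
  then show ?case using ru by simp
next
  case (braid i)
  have hm: "\<forall>x y. T (m x y) = m (T x) (T y)"
    using lmD[OF L] by blast+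
  have ru: "\<forall>x. m x one = x" and a: "\<forall>x y z. m x (m y z) = m (m x y) z"
    and br: "m (m s (T s)) s = m (m (T s) s) (T s)"
    using lmD[OF L] by blast+
  have B: "(T ^^ Suc i) s = (T ^^ i) (T s)" by (simp only: funpow_Suc_right comp_def)
  have "(T ^^ i) (m (m s (T s)) s) = (T ^^ i) (m (m (T s) s) (T s))" using br by simp
  then have "m (m ((T ^^ i) s) ((T ^^ Suc i) s)) ((T ^^ i) s)
           = m (m ((T ^^ Suc i) s) ((T ^^ i) s)) ((T ^^ Suc i) s)"
    unfolding B by (simp only: Tpow_mult[OF hm])
  then show ?case using ru a by (simp only: bev.simps if_True)
qed (simp_all)

definition bev' :: "('a \<Rightarrow> 'a \<Rightarrow> 'a) \<Rightarrow> ('a \<Rightarrow> 'a) \<Rightarrow> ('a \<Rightarrow> 'a \<Rightarrow> bool) \<Rightarrow> 'a \<Rightarrow> 'a \<Rightarrow> 'a \<Rightarrow> bword \<Rightarrow> 'a" where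
  "bev' m T eqv one s sb w = (if link_model m T eqv one s sb then bev m T one s sb w else undefined)"

lift_definition fb :: "('a \<Rightarrow> 'a \<Rightarrow> 'a) \<Rightarrow> ('a \<Rightarrow> 'a) \<Rightarrow> ('a \<Rightarrow> 'a \<Rightarrow> bool) \<Rightarrow> 'a \<Rightarrow> 'a \<Rightarrow> 'a \<Rightarrow> braid \<Rightarrow> 'a"
  is bev'
  by (auto simp: bev'_def intro: bev_resp)

theorem lemma6p3:
  fixes mult :: "'a \<Rightarrow> 'a \<Rightarrow> 'a" and T :: "'a \<Rightarrow> 'a" and eqv :: "'a \<Rightarrow> 'a \<Rightarrow> bool"
    and one sig sigb :: 'a
  assumes "link_model mult T eqv one sig sigb"
  shows "\<exists>f :: braid \<Rightarrow> 'a.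
           f braid_one = one \<and>
           (\<forall>i::nat. i \<ge> 1 \<longrightarrow> f (braid_gen i) = (T ^^ (i - 1)) sig) \<and>
           (\<forall>b1 b2. f (braid_mult b1 b2) = mult (f b1) (f b2))"
proof (intro exI[of _ "fb mult T eqv one sig sigb"] conjI allI impI)
  have ru: "\<forall>x. mult x one = x" using lmD[OF assms] by blast
  show "fb mult T eqv one sig sigb braid_one = one"
    unfolding braid_one.abs_eq fb.abs_eq by (simp add: bev'_def assms)
  show "fb mult T eqv one sig sigb (braid_gen i) = (T ^^ (i - 1)) sig" for i
    unfolding braid_gen.abs_eq fb.abs_eq using ru by (simp add: bev'_def assms)
  show "fb mult T eqv one sig sigb (braid_mult b1 b2) =
        mult (fb mult T eqv one sig sigb b1) (fb mult T eqv one sig sigb b2)" for b1 b2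
  proof (induct b1 rule: braid.abs_induct)
    case (1 x)
    then show ?case
    proof (induct b2 rule: braid.abs_induct)
      case (1 y)
      then show ?case
        unfolding braid_mult.abs_eq fb.abs_eq by (simp add: bev'_def assms bev_append[OF assms])
    qed
  qed
qed

end
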